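(* Let $t$ be a normal $\lambda$-term, $v$ a $\lambda$-term, and $\alpha,x$ variables with $x\in Fv(t)$, and let $x_1,\dots,x_n$ ($n\ge 0$) be variables distinct from $\alpha$. If $t[\lambda x_1\dots\lambda x_n\alpha/x]\rightarrow_\beta v$, then $\alpha\in Fv(v)$.
   Context: $\lambda$-terms are those of the untyped $\lambda$-calculus; $Fv(t)$ is the set of free variables of $t$; $t[u/x]$ is capture-avoiding substitution; $\rightarrow_\beta$ denotes $\beta$-reduction in zero or more steps; a term is normal if it contains no $\beta$-redex. *)

theory Defs
  imports Main
begin

text \<open>Untyped lambda-terms in de Bruijn notation (as in HOL/Proofs/Lambda).
  A free variable is a "loose" index; free variable number i occurring under
  k binders is represented by Var (i + k).\<close>

datatype dB =
    Var nat
  | App dB dB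
  | Abs dB

primrec lift :: "dB \<Rightarrow> nat \<Rightarrow> dB" where
  "lift (Var i) k = (if i < k then Var i else Var (Suc i))"
| "lift (App s t) k = App (lift s k) (lift t k)"
| "lift (Abs s) k = Abs (lift s (Suc k))"

primrec subst :: "dB \<Rightarrow> dB \<Rightarrow> nat \<Rightarrow> dB" where
  "subst (Var i) s k = (if k < i then Var (i - 1) else if i = k then s else Var i)"
| "subst (App t u) s k = App (subst t s k) (subst u s k)"
| "subst (Abs t) s k = Abs (subst t (lift s 0) (Suc k))"

primrec fsubst :: "dB \<Rightarrow> dB \<Rightarrow> nat \<Rightarrow> dB" where
  "fsubst (Var i) u x = (if i = x then u else Var i)"
| "fsubst (App s t) u x = App (fsubst s u x) (fsubst t u x)"
| "fsubst (Abs s) u x = Abs (fsubst s (lift u 0) (Suc x))"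

primrec Fv :: "dB \<Rightarrow> nat set" where
  "Fv (Var i) = {i}"
| "Fv (App s t) = Fv s \<union> Fv t"
| "Fv (Abs s) = {i. Suc i \<in> Fv s}"

inductive beta :: "dB \<Rightarrow> dB \<Rightarrow> bool" (infixl "\<rightarrow>\<^sub>\<beta>" 50) where
  redex: "App (Abs s) t \<rightarrow>\<^sub>\<beta> subst s t 0"
| appL: "s \<rightarrow>\<^sub>\<beta> t \<Longrightarrow> App s u \<rightarrow>\<^sub>\<beta> App t u"
| appR: "s \<rightarrow>\<^sub>\<beta> t \<Longrightarrow> App u s \<rightarrow>\<^sub>\<beta> App u t"
| abs: "s \<rightarrow>\<^sub>\<beta> t \<Longrightarrow> Abs s \<rightarrow>\<^sub>\<beta> Abs t"

abbreviation beta_reds :: "dB \<Rightarrow> dB \<Rightarrow> bool" (infixl "\<rightarrow>\<^sub>\<beta>\<^sup>*" 50) where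
  "s \<rightarrow>\<^sub>\<beta>\<^sup>* t \<equiv> beta\<^sup>*\<^sup>* s t"

primrec has_redex :: "dB \<Rightarrow> bool" where
  "has_redex (Var i) = False"
| "has_redex (App s t) = ((\<exists>b. s = Abs b) \<or> has_redex s \<or> has_redex t)"
| "has_redex (Abs s) = has_redex s"

definition normal :: "dB \<Rightarrow> bool" where
  "normal t \<longleftrightarrow> \<not> has_redex t"

text \<open>The term \<lambda>x1...\<lambda>xn.\<alpha> with the x_i distinct from \<alpha> (so \<alpha> is free).\<close>
definition lams_var :: "nat \<Rightarrow> nat \<Rightarrow> dB" where
  "lams_var n \<alpha> = (Abs ^^ n) (Var (\<alpha> + n))"

end

theory Submission
  imports Defs
begin

abbreviation L :: "nat \<Rightarrow> nat \<Rightarrow> dB" where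
  "L m a \<equiv> (Abs ^^ m) (Var (a + m))"

lemma lift_L: "k \<le> a \<Longrightarrow> lift (L m a) k = L m (Suc a)"
proof (induction m arbitrary: a k)
  case 0 then show ?case by simp
next
  case (Suc m)
  have "L (Suc m) a = Abs (L m (Suc a))" by simp
  moreover have "L (Suc m) (Suc a) = Abs (L m (Suc (Suc a)))" by simp
  ultimately show ?case using Suc.IH[of "Suc k" "Suc a"] Suc.prems by simp
qed

lemma subst_L: "k \<le> a \<Longrightarrow> subst (L m (Suc a)) w k = L m a"
proof (induction m arbitrary: a k w)
  case 0 then show ?case by simp
next
  case (Suc m)
  have "L (Suc m) (Suc a) = Abs (L m (Suc (Suc a)))" by simp
  moreover have "L (Suc m) a = Abs (L m (Suc a))" by simp
  ultimately show ?case using Suc.IH[of "Suc k" "Suc a" "lift w 0"] Suc.prems by simp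
qed

lemma Fv_L: "a \<in> Fv (L m a)"
proof (induction m arbitrary: a)
  case 0 then show ?case by simp
next
  case (Suc m)
  have "L (Suc m) a = Abs (L m (Suc a))" by simp
  then show ?case using Suc.IH[of "Suc a"] by simp
qed

lemma L_nobeta: "\<not> (L m a \<rightarrow>\<^sub>\<beta> s)"
proof (induction m arbitrary: a s)
  case 0 then show ?case by (auto elim: beta.cases)
next
  case (Suc m)
  have "L (Suc m) a = Abs (L m (Suc a))" by simp
  then show ?case using Suc.IH[of "Suc a"] by (auto elim: beta.cases)
qed

inductive hd :: "nat \<Rightarrow> dB \<Rightarrow> bool" where
  hd_L: "hd a (L m a)"
| hd_App: "hd a s \<Longrightarrow> hd a (App s w)"

inductive rigid :: "dB \<Rightarrow> bool" where
  rigid_Var: "rigid (Var h)"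
| rigid_App: "rigid s \<Longrightarrow> rigid (App s w)"

inductive good :: "nat \<Rightarrow> dB \<Rightarrow> bool" where
  good_hd: "hd a s \<Longrightarrow> good a s"
| good_abs: "good (Suc a) s \<Longrightarrow> good a (Abs s)"
| good_arg: "rigid s \<Longrightarrow> good a w \<Longrightarrow> good a (App s w)"
| good_fun: "rigid s \<Longrightarrow> good a s \<Longrightarrow> good a (App s w)"

lemma rigid_notAbs: "rigid s \<Longrightarrow> s \<noteq> Abs b"
  by (induction rule: rigid.induct) auto

lemma rigid_beta: "rigid s \<Longrightarrow> s \<rightarrow>\<^sub>\<beta> s' \<Longrightarrow> rigid s'"
proof (induction arbitrary: s' rule: rigid.induct)
  case (rigid_Var h) then show ?case by (auto elim: beta.cases)
next
  case (rigid_App s w)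
  from rigid_App.prems show ?case
    by (cases rule: beta.cases) (use rigid_App rigid_notAbs in \<open>auto intro: rigid.intros\<close>)
qed

lemma hd_beta: "hd a s \<Longrightarrow> s \<rightarrow>\<^sub>\<beta> s' \<Longrightarrow> hd a s'"
proof (induction arbitrary: s' rule: hd.induct)
  case (hd_L a m) then show ?case using L_nobeta by blast
next
  case (hd_App a s w)
  from hd_App.prems show ?case
  proof (cases rule: beta.cases)
    case (redex b)
    then have "hd a (Abs b)" using hd_App by simp
    then show ?thesis
    proof (cases rule: hd.cases)
      case (hd_L m)
      then obtain m' where m: "m = Suc m'" by (cases m) auto
      then have "b = L m' (Suc a)" using hd_L by simp
      then show ?thesis using redex subst_L[of 0 a m' w] hd.hd_L by simp
    qed
  qed (use hd_App in \<open>auto intro: hd.intros\<close>)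
qed

lemma good_beta: "good a s \<Longrightarrow> s \<rightarrow>\<^sub>\<beta> s' \<Longrightarrow> good a s'"
proof (induction arbitrary: s' rule: good.induct)
  case (good_hd a s) then show ?case using hd_beta good.good_hd by blast
next
  case (good_abs a s)
  from good_abs.prems show ?case
    by (cases rule: beta.cases) (use good_abs in \<open>auto intro: good.intros\<close>)
next
  case (good_arg s a w)
  from good_arg.prems show ?case
    by (cases rule: beta.cases) (use good_arg rigid_notAbs rigid_beta in \<open>auto intro: good.intros\<close>)
next
  case (good_fun s a w)
  from good_fun.prems show ?case
    by (cases rule: beta.cases) (use good_fun rigid_notAbs rigid_beta in \<open>auto intro: good.intros\<close>)
qed

lemma hd_Fv: "hd a s \<Longrightarrow> a \<in> Fv s"
  by (induction rule: hd.induct) (auto simp: Fv_L)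

lemma good_Fv: "good a s \<Longrightarrow> a \<in> Fv s"
  by (induction rule: good.induct) (auto simp: hd_Fv)

lemma good_reds: "s \<rightarrow>\<^sub>\<beta>\<^sup>* s' \<Longrightarrow> good a s \<Longrightarrow> good a s'"
  by (induction rule: rtranclp_induct) (auto intro: good_beta)

lemma spine: "\<not> has_redex t \<Longrightarrow> (\<forall>b. t \<noteq> Abs b) \<Longrightarrow>
   hd a (fsubst t (L n a) x) \<or> rigid (fsubst t (L n a) x)"
proof (induction t)
  case (Var i) then show ?case by (auto intro: hd.intros rigid.intros)
next
  case (App s u)
  then have "hd a (fsubst s (L n a) x) \<or> rigid (fsubst s (L n a) x)" by auto
  then show ?case by (auto intro: hd.intros rigid.intros)
next
  case (Abs s) then show ?case by auto
qed

lemma main: "\<not> has_redex t \<Longrightarrow> x \<in> Fv t \<Longrightarrow> good a (fsubst t (L n a) x)"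
proof (induction t arbitrary: x a)
  case (Var i) then show ?case by (auto intro: hd.intros good.intros)
next
  case (Abs s)
  have "good (Suc a) (fsubst s (L n (Suc a)) (Suc x))" using Abs.IH[of "Suc x" "Suc a"] Abs.prems by auto
  then show ?case using lift_L[of 0 a n] by (auto intro: good.intros)
next
  case (App s u)
  have ns: "\<forall>b. s \<noteq> Abs b" "\<not> has_redex s" "\<not> has_redex u" using App.prems by auto
  show ?case
  proof (cases "hd a (fsubst s (L n a) x)")
    case True then show ?thesis by (auto intro: hd.intros good.intros)
  next
    case False
    then have r: "rigid (fsubst s (L n a) x)" using spine[OF ns(2) ns(1)] by blast
    show ?thesis
    proof (cases "x \<in> Fv s")
      case True then show ?thesis using App.IH(1) ns r by (auto intro: good.intros)
    next
      case False then have "x \<in> Fv u" using App.prems by auto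
      then show ?thesis using App.IH(2) ns r by (auto intro: good.intros)
    qed
  qed
qed

theorem lemma2p1p2:
  fixes t v :: dB and \<alpha> x n :: nat
  assumes "normal t"
    and "x \<in> Fv t"
    and "fsubst t (lams_var n \<alpha>) x \<rightarrow>\<^sub>\<beta>\<^sup>* v"
  shows "\<alpha> \<in> Fv v"
proof -
  have "good \<alpha> (fsubst t (lams_var n \<alpha>) x)"
    using main assms(1,2) unfolding normal_def lams_var_def by blast
  then show ?thesis using good_reds[OF assms(3)] good_Fv by blast
qed

end
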